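(* Let $\mathcal{H}=(V,E)$ be a linear hypergraph without loop with $n$ vertices, and suppose $E$ can be partitioned as $E=E'\sqcup E''$ such that, with $\mathcal{H}'=(V,E')$: (i) $\mathrm{ar}(\mathcal{H}')\ge\sqrt{n}$; (ii) $|e|<\sqrt{n}$ for every $e\in E''$; (iii) for every $e\in E''$ there exists $x_0\in e$ with $\mathrm{deg}_{\mathcal{H}}(x_0)\le |e|$. Then $\mathrm{q}(\mathcal{H})\le \Delta([\mathcal{H}]_2)+1$.
   Context: A hypergraph $\mathcal{H}=(V,E)$ has a finite vertex set $V$ and a finite set $E$ of nonempty subsets of $V$ (hyperedges); a loop is a hyperedge with one element; linear means distinct hyperedges share at most one vertex. $\mathrm{deg}_{\mathcal{H}}(x)$ is the number of hyperedges containing $x$. The antirank $\mathrm{ar}$ is the minimum cardinality of a hyperedge ($\infty$ if there are none). The 2-section $[\mathcal{H}]_2$ is the simple graph on $V$ where distinct vertices are adjacent iff some hyperedge contains both; $\Delta([\mathcal{H}]_2)$ is its maximum degree. The chromatic index $\mathrm{q}(\mathcal{H})$ is the least number of colors in a coloring of hyperedges where distinct intersecting hyperedges get different colors. *)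

theory Defs
  imports "HOL-Analysis.Analysis"
begin

definition hypergraph :: "'a set \<Rightarrow> 'a set set \<Rightarrow> bool" where
  "hypergraph V E \<longleftrightarrow> finite V \<and> finite E \<and> (\<forall>e\<in>E. e \<noteq> {} \<and> e \<subseteq> V)"

definition linear_hg :: "'a set set \<Rightarrow> bool" where
  "linear_hg E \<longleftrightarrow> (\<forall>e\<in>E. \<forall>f\<in>E. e \<noteq> f \<longrightarrow> card (e \<inter> f) \<le> 1)"

definition loopless :: "'a set set \<Rightarrow> bool" where
  "loopless E \<longleftrightarrow> (\<forall>e\<in>E. card e \<noteq> 1)"

definition hdeg :: "'a set set \<Rightarrow> 'a \<Rightarrow> nat" where
  "hdeg E x = card {e\<in>E. x \<in> e}"

definition antirank :: "'a set set \<Rightarrow> ereal" where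
  "antirank E = (if E = {} then \<infinity> else ereal (real (Min (card ` E))))"

definition sec2_adj :: "'a set set \<Rightarrow> 'a \<Rightarrow> 'a \<Rightarrow> bool" where
  "sec2_adj E x y \<longleftrightarrow> x \<noteq> y \<and> (\<exists>e\<in>E. x \<in> e \<and> y \<in> e)"

definition sec2_deg :: "'a set \<Rightarrow> 'a set set \<Rightarrow> 'a \<Rightarrow> nat" where
  "sec2_deg V E x = card {y\<in>V. sec2_adj E x y}"

definition sec2_maxdeg :: "'a set \<Rightarrow> 'a set set \<Rightarrow> nat" where
  "sec2_maxdeg V E = (if V = {} then 0 else Max (sec2_deg V E ` V))"

definition proper_edge_colouring :: "'a set set \<Rightarrow> ('a set \<Rightarrow> nat) \<Rightarrow> nat \<Rightarrow> bool" where
  "proper_edge_colouring E c k \<longleftrightarrow>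
     (\<forall>e\<in>E. c e < k) \<and>
     (\<forall>e\<in>E. \<forall>f\<in>E. e \<noteq> f \<and> e \<inter> f \<noteq> {} \<longrightarrow> c e \<noteq> c f)"

definition chromatic_index :: "'a set set \<Rightarrow> nat" where
  "chromatic_index E = (LEAST k. \<exists>c. proper_edge_colouring E c k)"

end

theory Submission
  imports Defs
begin

definition star :: "'a set set \<Rightarrow> 'a \<Rightarrow> 'a set set" where "star F y = {g\<in>F. y\<in>g}"
definition cover :: "'a set set \<Rightarrow> 'a \<Rightarrow> 'a set" where "cover F y = (\<Union>g\<in>star F y. g - {y})"
definition nbrs :: "'a set set \<Rightarrow> 'a set \<Rightarrow> 'a set set" where "nbrs F e = {g\<in>F. g \<noteq> e \<and> g \<inter> e \<noteq> {}}"

lemma extend_one: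
  assumes "proper_edge_colouring G c D" "finite G" "e \<notin> G"
    "card (c ` {f\<in>G. f \<inter> e \<noteq> {}}) < D"
  shows "\<exists>c'. proper_edge_colouring (insert e G) c' D \<and> (\<forall>x\<in>G. c' x = c x)"
proof -
  let ?N = "c ` {f\<in>G. f \<inter> e \<noteq> {}}"
  have "\<not> {..<D} \<subseteq> ?N"
  proof
    assume "{..<D} \<subseteq> ?N"
    then have "card {..<D} \<le> card ?N" using assms(2) by (intro card_mono) auto
    then show False using assms(4) by simp
  qed
  then obtain d where d: "d < D" "d \<notin> ?N" by auto
  let ?c = "c(e := d)"
  have "proper_edge_colouring (insert e G) ?c D"
    using assms(1,3) d unfolding proper_edge_colouring_def
    by (auto simp: Int_commute)
  moreover have "\<forall>x\<in>G. ?c x = c x" using assms(3) by auto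
  ultimately show ?thesis by blast
qed

lemma extend_set:
  assumes "finite S" "proper_edge_colouring G0 c D" "finite G0"
    "\<forall>e\<in>S. card {f\<in>(G0 \<union> S) - {e}. f \<inter> e \<noteq> {}} < D"
  shows "\<exists>c'. proper_edge_colouring (G0 \<union> S) c' D \<and> (\<forall>x\<in>G0. c' x = c x)"
  using assms
proof (induction S rule: finite_induct)
  case empty
  then show ?case by auto
next
  case (insert x S)
  have "\<forall>e\<in>S. card {f\<in>(G0 \<union> S) - {e}. f \<inter> e \<noteq> {}} < D"
  proof
    fix e assume "e \<in> S"
    have "card {f\<in>(G0 \<union> S) - {e}. f \<inter> e \<noteq> {}} \<le> card {f\<in>(G0 \<union> insert x S) - {e}. f \<inter> e \<noteq> {}}"
      using insert.hyps insert.prems(2) by (intro card_mono) auto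
    then show "card {f\<in>(G0 \<union> S) - {e}. f \<inter> e \<noteq> {}} < D" using insert.prems(3) \<open>e\<in>S\<close> by force
  qed
  then obtain c1 where c1: "proper_edge_colouring (G0 \<union> S) c1 D" "\<forall>x\<in>G0. c1 x = c x"
    using insert by blast
  show ?case
  proof (cases "x \<in> G0")
    case True
    then have "G0 \<union> insert x S = G0 \<union> S" by auto
    then show ?thesis using c1 by auto
  next
    case False
    have "card (c1 ` {f\<in>G0 \<union> S. f \<inter> x \<noteq> {}}) \<le> card {f\<in>G0 \<union> S. f \<inter> x \<noteq> {}}"
      using insert by (intro card_image_le) auto
    also have "\<dots> \<le> card {f\<in>(G0 \<union> insert x S) - {x}. f \<inter> x \<noteq> {}}"
      using insert.hyps insert.prems(2) False by (intro card_mono) auto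
    also have "\<dots> < D" using insert.prems(3) by blast
    finally obtain c2 where "proper_edge_colouring (insert x (G0 \<union> S)) c2 D" "\<forall>y\<in>G0 \<union> S. c2 y = c1 y"
      using extend_one[OF c1(1)] insert False by blast
    then show ?thesis using c1 by auto
  qed
qed

lemma sum_eq_bound:
  fixes f :: "'b \<Rightarrow> nat"
  assumes "finite A" "\<forall>x\<in>A. f x \<le> K" "sum f A \<ge> card A * K" "x \<in> A"
  shows "f x = K"
proof (rule ccontr)
  assume "f x \<noteq> K"
  then have "f x < K" using assms by force
  then have "sum f A < sum (\<lambda>_. K) A"
    using assms by (intro sum_strict_mono_ex1) auto
  then show False using assms(3) by simp
qed

lemma sum_eq_bound_below:
  fixes f :: "'b \<Rightarrow> nat"
  assumes "finite A" "\<forall>x\<in>A. K \<le> f x" "sum f A \<le> card A * K" "x \<in> A"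
  shows "f x = K"
proof (rule ccontr)
  assume "f x \<noteq> K"
  then have "K < f x" using assms by force
  then have "sum (\<lambda>_. K) A < sum f A"
    using assms by (intro sum_strict_mono_ex1) auto
  then show False using assms(3) by simp
qed



lemma arith3: "1 \<le> (s::nat) \<Longrightarrow> (s * s+s)*(s-1) = s*(s * s-1)"
proof -
  assume "1 \<le> s"
  then obtain t where "s = 1 + t" using le_Suc_ex by blast
  then show ?thesis by (simp add: algebra_simps)
qed
lemma arith4: "2 \<le> (s::nat) \<Longrightarrow> k*(s-1) = s * s-1 \<Longrightarrow> k = s+1"
proof -
  assume a: "2 \<le> s" "k*(s-1) = s * s-1"
  then obtain t where t: "s = 2 + t" using le_Suc_ex by blast
  have "k * (t+1) = (t+3)*(t+1)" using a t by (simp add: algebra_simps)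
  then have "k = t + 3" by (simp only: mult_cancel2) simp
  then show ?thesis using t by simp
qed
lemma arith5: "2 \<le> (s::nat) \<Longrightarrow> 1 \<le> h \<Longrightarrow> (h - 1) + s*(s-1) \<le> s * s - 1 \<Longrightarrow> h \<le> s"
proof -
  assume a: "2 \<le> s" "1 \<le> h" "(h - 1) + s*(s-1) \<le> s * s - 1"
  then obtain t where t: "s = 2 + t" using le_Suc_ex by blast
  obtain u where u: "h = 1 + u" using a le_Suc_ex by blast
  show ?thesis using a t u by (simp add: algebra_simps)
qed
lemma arith6: "2 \<le> (s::nat) \<Longrightarrow> k*(s-1) \<le> s * s-1 \<Longrightarrow> k \<le> s+1"
proof -
  assume a: "2 \<le> s" "k*(s-1) \<le> s * s-1"
  then obtain t where t: "s = 2 + t" using le_Suc_ex by blast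
  have "k * (t+1) \<le> (t+3)*(t+1)" using a t by (simp add: algebra_simps)
  then have "k \<le> t + 3" by (simp only: mult_le_cancel2)
  then show ?thesis using t by simp
qed
lemma arith1: "2 \<le> (s::nat) \<Longrightarrow> (Dd+1+s)*(s-1) \<le> s*Dd \<Longrightarrow> s * s \<le> Dd + 1"
proof -
  assume a: "2 \<le> s" "(Dd+1+s)*(s-1) \<le> s*Dd"
  then obtain t where "s = 2 + t" using le_Suc_ex by blast
  with a show ?thesis by (simp add: algebra_simps)
qed
lemma arith2: "2 \<le> (s::nat) \<Longrightarrow> (d+s)*(s-1) \<le> s*(s * s-1) \<Longrightarrow> d \<le> s * s"
proof -
  assume a: "2 \<le> s" "(d+s)*(s-1) \<le> s*(s * s-1)"
  then obtain t where t: "s = 2 + t" using le_Suc_ex by blast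
  have "s*(s * s-1) = (s * s)*(s-1) + s*(s-1)" using t by (simp add: algebra_simps)
  then have "(d+s)*(s-1) \<le> (s * s + s)*(s-1)" using a by (simp add: algebra_simps)
  then have "d + s \<le> s * s+s" using a by (simp add: mult_le_cancel2)
  then show ?thesis by simp
qed

lemma arith7: "1 \<le> (s::nat) \<Longrightarrow> (s+1)*(s-1) = s * s - 1"
proof -
  assume "1 \<le> s"
  then obtain t where "s = 1 + t" using le_Suc_ex by blast
  then show ?thesis by (simp add: algebra_simps)
qed

lemma two_elems: assumes "2 \<le> card A" obtains x y where "x \<in> A" "y \<in> A" "x \<noteq> y"
proof -
  have "A \<noteq> {}" using assms by auto
  then obtain x where x: "x \<in> A" by blast
  have "finite A" using assms card.infinite by force
  then have "card (A - {x}) \<ge> 1" using assms x by simp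
  then have "A - {x} \<noteq> {}" by (metis card.empty not_one_le_zero)
  then obtain y where "y \<in> A - {x}" by blast
  then show ?thesis using that x by auto
qed

locale LH =
  fixes V :: "'a set" and E :: "'a set set" and Dl :: nat
  assumes finV: "finite V" and finE: "finite E" and sub: "\<And>e. e\<in>E \<Longrightarrow> e \<subseteq> V"
  and two: "\<And>e. e\<in>E \<Longrightarrow> 2 \<le> card e"
  and lin: "\<And>e f. e\<in>E \<Longrightarrow> f\<in>E \<Longrightarrow> e\<noteq>f \<Longrightarrow> card (e\<inter>f) \<le> 1"
  and covD: "\<And>y. y\<in>V \<Longrightarrow> card (cover E y) \<le> Dl"
  and DlV: "Dl < card V"
begin

lemma fin_edge: "e \<in> E \<Longrightarrow> finite e"
  using sub finV finite_subset by blast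

lemma lin2: "e\<in>E \<Longrightarrow> f\<in>E \<Longrightarrow> x\<in>e \<Longrightarrow> x\<in>f \<Longrightarrow> y\<in>e \<Longrightarrow> y\<in>f \<Longrightarrow> x \<noteq> y \<Longrightarrow> e = f"
proof (rule ccontr)
  assume a: "e\<in>E" "f\<in>E" "x\<in>e" "x\<in>f" "y\<in>e" "y\<in>f" "x \<noteq> y" "e \<noteq> f"
  have "{x,y} \<subseteq> e \<inter> f" using a by auto
  then have "card {x,y} \<le> card (e \<inter> f)" using fin_edge[OF a(1)] by (intro card_mono) auto
  then show False using lin[OF a(1,2,8)] a(7) by simp
qed

lemma star_fin: assumes "F \<subseteq> E" shows "finite (star F y)"
proof -
  have "finite F" using finite_subset[OF assms finE] .
  moreover have "star F y \<subseteq> F" unfolding star_def by auto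
  ultimately show ?thesis using finite_subset by blast
qed

lemma cover_card:
  assumes "F \<subseteq> E"
  shows "(\<Sum>g\<in>star F y. card g - 1) = card (cover F y)"
proof -
  have fs: "finite (star F y)" using star_fin[OF assms] .
  have "card (cover F y) = (\<Sum>g\<in>star F y. card (g - {y}))"
    unfolding cover_def
  proof (rule card_UN_disjoint[OF fs])
    show "\<forall>g\<in>star F y. finite (g - {y})" using fin_edge assms unfolding star_def by auto
    show "\<forall>g\<in>star F y. \<forall>h\<in>star F y. g \<noteq> h \<longrightarrow> (g - {y}) \<inter> (h - {y}) = {}"
      using lin2 assms unfolding star_def by blast
  qed
  also have "\<dots> = (\<Sum>g\<in>star F y. card g - 1)"
    using fin_edge assms by (intro sum.cong) (auto simp: star_def)
  finally show ?thesis by simp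
qed

lemma cover_sub: "F \<subseteq> E \<Longrightarrow> cover F y \<subseteq> V - {y}"
  using sub unfolding cover_def star_def by blast

lemma cover_le: "F \<subseteq> E \<Longrightarrow> y \<in> V \<Longrightarrow> card (cover F y) \<le> Dl"
proof -
  assume "F \<subseteq> E" "y \<in> V"
  then have "cover F y \<subseteq> cover E y" unfolding cover_def star_def by auto
  then have "card (cover F y) \<le> card (cover E y)"
    using cover_sub[of E y] finV by (intro card_mono) (auto intro: finite_subset)
  then show ?thesis using covD[OF \<open>y\<in>V\<close>] by simp
qed

lemma nbrs_card:
  assumes "F \<subseteq> E" "e \<in> F"
  shows "card (nbrs F e) = (\<Sum>y\<in>e. card (star F y) - 1)"
proof -
  have fe: "finite e" using fin_edge assms by auto
  have "nbrs F e = (\<Union>y\<in>e. star F y - {e})" unfolding nbrs_def star_def by auto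
  then have "card (nbrs F e) = (\<Sum>y\<in>e. card (star F y - {e}))"
  proof (simp only:, intro card_UN_disjoint[OF fe])
    show "\<forall>y\<in>e. finite (star F y - {e})" using star_fin[OF assms(1)] by auto
    show "\<forall>y\<in>e. \<forall>z\<in>e. y \<noteq> z \<longrightarrow> (star F y - {e}) \<inter> (star F z - {e}) = {}"
      using lin2 assms unfolding star_def by blast
  qed
  also have "\<dots> = (\<Sum>y\<in>e. card (star F y) - 1)"
    using assms star_fin[OF assms(1)] by (intro sum.cong) (auto simp: star_def)
  finally show ?thesis .
qed


lemma star_lower:
  assumes "F \<subseteq> E" "\<forall>g\<in>F. s \<le> card g"
  shows "card (star F y) * (s - 1) \<le> card (cover F y)"
proof -
  have "card (star F y) * (s - 1) = (\<Sum>g\<in>star F y. s - 1)" by simp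
  also have "\<dots> \<le> (\<Sum>g\<in>star F y. card g - 1)"
    using assms by (intro sum_mono) (auto simp: star_def)
  finally show ?thesis using cover_card[OF assms(1)] by simp
qed

lemma edge_props: assumes "F \<subseteq> E" "e \<in> F" shows "finite e" "e \<subseteq> V" "2 \<le> card e"
  using assms fin_edge sub two by auto

lemma star_ge1: assumes "F \<subseteq> E" "e \<in> F" "y \<in> e" shows "1 \<le> card (star F y)"
proof -
  have "e \<in> star F y" using assms unfolding star_def by auto
  then show ?thesis using star_fin[OF assms(1)] by (metis One_nat_def Suc_leI card_gt_0_iff empty_iff)
qed

lemma nontight:
  assumes F: "F \<subseteq> E" "e \<in> F" and mn: "\<forall>g\<in>F. card e \<le> card g" and x0: "x0 \<in> e"
    "card (star F x0) \<le> card e"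
  shows "card (nbrs F e) \<le> Dl"
proof -
  define s where "s = card e"
  note ep = edge_props[OF F]
  have bnd: "card (star F y) \<le> Dl div (s-1)" if "y \<in> e" for y
  proof -
    have "card (star F y) * (s-1) \<le> Dl"
      using star_lower[OF F(1), of s y] mn cover_le[OF F(1), of y] that ep s_def by force
    moreover have "s - 1 > 0" using ep s_def by simp
    ultimately show ?thesis by (metis div_le_mono nonzero_mult_div_cancel_right not_gr0)
  qed
  have "(\<Sum>y\<in>e-{x0}. card (star F y)) \<le> card (e-{x0}) * (Dl div (s-1))"
    using sum_bounded_above[of "e-{x0}" "\<lambda>y. card (star F y)" "Dl div (s-1)"] bnd by simp
  also have "card (e-{x0}) = s - 1" using ep x0 s_def by simp
  also have "(s-1) * (Dl div (s-1)) \<le> Dl" by (metis mult.commute div_times_less_eq_dividend)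
  finally have A: "(\<Sum>y\<in>e-{x0}. card (star F y)) \<le> Dl" .
  have B: "(\<Sum>y\<in>e-{x0}. card (star F y)) = (\<Sum>y\<in>e-{x0}. card (star F y) - 1) + (s - 1)"
  proof -
    have "(\<Sum>y\<in>e-{x0}. card (star F y)) = (\<Sum>y\<in>e-{x0}. (card (star F y) - 1) + 1)"
      using star_ge1[OF F] by (intro sum.cong) (auto, metis Suc_diff_1 One_nat_def Suc_le_eq)
    also have "\<dots> = (\<Sum>y\<in>e-{x0}. card (star F y) - 1) + card (e - {x0})"
      unfolding sum.distrib by simp
    finally show ?thesis using ep x0 s_def by simp
  qed
  have "card (nbrs F e) = (card (star F x0) - 1) + (\<Sum>y\<in>e-{x0}. card (star F y) - 1)"
    using nbrs_card[OF F] sum.remove[OF ep(1) x0(1)] by simp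
  then show ?thesis using A B x0(2) s_def by linarith
qed

lemma sum_star: assumes "F \<subseteq> E" "e \<in> F"
  shows "(\<Sum>y\<in>e. card (star F y)) = card (nbrs F e) + card e"
proof -
  have "(\<Sum>y\<in>e. card (star F y)) = (\<Sum>y\<in>e. (card (star F y) - 1) + 1)"
    using star_ge1[OF assms] by (intro sum.cong) (auto, metis Suc_diff_1 One_nat_def Suc_le_eq)
  also have "\<dots> = (\<Sum>y\<in>e. card (star F y) - 1) + card e"
    unfolding sum.distrib by simp
  finally show ?thesis using nbrs_card[OF assms] by simp
qed

lemma tight_facts:
  assumes F: "F \<subseteq> E" "e \<in> F" and mn: "\<forall>g\<in>F. card e \<le> card g"
    and sq: "card V \<le> card e * card e" and big: "Dl < card (nbrs F e)"
  shows "Dl + 1 = card e * card e" "card V = card e * card e" "card (nbrs F e) = card e * card e"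
    "\<forall>y\<in>e. cover F y = V - {y}" "\<forall>y\<in>e. card (star F y) = card e + 1" "\<forall>g\<in>F. card g = card e"
proof -
  define s where "s = card e"
  define d where "d = card (nbrs F e)"
  note ep = edge_props[OF F]
  have s2: "2 \<le> s" using ep s_def by simp
  have h1: "card (star F y) * (s-1) \<le> card (cover F y)" for y
    using star_lower[OF F(1), of s y] mn s_def by auto
  have h2: "card (cover F y) \<le> Dl" if "y \<in> e" for y using cover_le[OF F(1)] ep that by auto
  have S1: "(\<Sum>y\<in>e. card (star F y) * (s-1)) = (d+s)*(s-1)"
    using sum_star[OF F] unfolding d_def s_def sum_distrib_right[symmetric] by simp
  have S2: "(\<Sum>y\<in>e. card (star F y) * (s-1)) \<le> s * Dl"
  proof -
    have "\<forall>y\<in>e. card (star F y) * (s-1) \<le> Dl" using h1 h2 le_trans by blast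
    then have "(\<Sum>y\<in>e. card (star F y) * (s-1)) \<le> of_nat (card e) * Dl"
      by (intro sum_bounded_above) auto
    then show ?thesis using s_def by simp
  qed
  have "(Dl+1+s)*(s-1) \<le> (d+s)*(s-1)" using big d_def by (intro mult_le_mono1) simp
  then have "s * s \<le> Dl + 1" using arith1[OF s2] S1 S2 by simp
  then have Dl: "Dl + 1 = s * s" and V: "card V = s * s" using DlV sq s_def by auto
  have Dl2: "Dl = s * s - 1" using Dl by linarith
  have "s * Dl = s * (s * s - 1)" using Dl2 by simp
  then have "(d+s)*(s-1) \<le> s*(s * s-1)" using S1 S2 by linarith
  then have "d \<le> s * s" using arith2[OF s2] by simp
  then have D: "d = s * s" using big d_def Dl by simp
  have eachT: "card (star F y) * (s-1) = Dl" if "y \<in> e" for y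
  proof (rule sum_eq_bound[OF ep(1) _ _ that])
    show "\<forall>x\<in>e. card (star F x) * (s - 1) \<le> Dl" using h1 h2 le_trans by blast
    have "card e * Dl = (s * s+s)*(s-1)" using arith3[of s] s2 Dl s_def by simp
    then show "card e * Dl \<le> (\<Sum>y\<in>e. card (star F y) * (s - 1))" using S1 D by simp
  qed
  have cst: "card (star F y) = s + 1" if "y \<in> e" for y
    using arith4[OF s2] eachT[OF that] Dl by simp
  have Tc: "card (cover F y) = Dl" if "y \<in> e" for y using eachT[OF that] h1[of y] h2[OF that] by simp
  have cov: "cover F y = V - {y}" if "y \<in> e" for y
  proof (rule card_subset_eq)
    show "finite (V - {y})" using finV by simp
    show "cover F y \<subseteq> V - {y}" using cover_sub[OF F(1)] .
    show "card (cover F y) = card (V - {y})" using Tc[OF that] Dl V ep that by auto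
  qed
  have sz: "card g = s" if "y \<in> e" "g \<in> star F y" for y g
  proof -
    have "card g - 1 = s - 1"
    proof (rule sum_eq_bound_below[OF star_fin[OF F(1)] _ _ that(2)])
      show "\<forall>x\<in>star F y. s - 1 \<le> card x - 1" using mn s_def unfolding star_def by auto
      show "sum (\<lambda>g. card g - 1) (star F y) \<le> card (star F y) * (s - 1)"
        using cover_card[OF F(1)] eachT[OF that(1)] Tc[OF that(1)] by simp
    qed
    moreover have "2 \<le> card g" using that F(1) two unfolding star_def by auto
    ultimately show ?thesis using s2 by simp
  qed
  have allsz: "card h = s" if "h \<in> F" for h
  proof (cases "h \<inter> e = {}")
    case False
    then obtain y where "y \<in> h" "y \<in> e" by auto
    then show ?thesis using sz[of y h] that unfolding star_def by auto
  next
    case True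
    have h2: "2 \<le> card h" using that F two by auto
    then have "h \<noteq> {}" by auto
    then obtain z where z: "z \<in> h" by blast
    have zV: "z \<in> V" using z that F sub by auto
    have ze: "z \<notin> e" using True z by auto
    have "\<forall>y\<in>e. \<exists>g. g \<in> star F y \<and> z \<in> g"
    proof
      fix y assume "y \<in> e"
      then have "z \<in> cover F y" using cov zV ze by auto
      then show "\<exists>g. g \<in> star F y \<and> z \<in> g" unfolding cover_def by auto
    qed
    then have "\<exists>G. \<forall>y\<in>e. G y \<in> star F y \<and> z \<in> G y" by (rule bchoice)
    then obtain G where G: "\<forall>y\<in>e. G y \<in> star F y \<and> z \<in> G y" by blast
    have injG: "inj_on G e"
    proof
      fix y1 y2 assume a: "y1 \<in> e" "y2 \<in> e" "G y1 = G y2"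
      show "y1 = y2"
      proof (rule ccontr)
        assume "y1 \<noteq> y2"
        moreover have "G y1 \<in> F" "y1 \<in> G y1" "y2 \<in> G y1" using G a unfolding star_def by auto
        ultimately have "G y1 = e" using lin2[of "G y1" e y1 y2] a F by blast
        moreover have "z \<in> G y1" using G a by blast
        ultimately show False using ze by simp
      qed
    qed
    have hG: "h \<notin> G ` e" using G True unfolding star_def by auto
    have sub1: "insert h (G ` e) \<subseteq> star F z" using G z that unfolding star_def by auto
    have "(\<Sum>g\<in>insert h (G ` e). card g - 1) \<le> (\<Sum>g\<in>star F z. card g - 1)"
      using sub1 star_fin[OF F(1)] by (intro sum_mono2) auto
    also have "\<dots> = card (cover F z)" using cover_card[OF F(1)] .
    also have "\<dots> \<le> card (V - {z})" using cover_sub[OF F(1)] finV by (intro card_mono) auto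
    also have "\<dots> = s * s - 1" using V zV finV by simp
    finally have A: "(\<Sum>g\<in>insert h (G ` e). card g - 1) \<le> s * s - 1" .
    have "(\<Sum>g\<in>insert h (G ` e). card g - 1) = (card h - 1) + (\<Sum>g\<in>G ` e. card g - 1)"
      using hG ep(1) by simp
    also have "(\<Sum>g\<in>G ` e. card g - 1) = (\<Sum>y\<in>e. card (G y) - 1)"
      using sum.reindex[OF injG] by simp
    also have "\<dots> = (\<Sum>y\<in>e. s - 1)" using sz G by (intro sum.cong) auto
    also have "\<dots> = s * (s - 1)" using s_def by simp
    finally have "(card h - 1) + s * (s-1) \<le> s * s - 1" using A by simp
    then have "card h \<le> s" using arith5[OF s2] h2 by simp
    then show ?thesis using mn that s_def by force
  qed
  show "Dl + 1 = card e * card e" "card V = card e * card e" "card (nbrs F e) = card e * card e"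
    "\<forall>y\<in>e. cover F y = V - {y}" "\<forall>y\<in>e. card (star F y) = card e + 1" "\<forall>g\<in>F. card g = card e"
    using Dl V D cov cst allsz unfolding s_def d_def by auto
qed

lemma uniform_facts:
  assumes F: "F \<subseteq> E" and s2: "2 \<le> s" and sz: "\<forall>g\<in>F. card g = s"
    and Dl: "Dl + 1 = s * s" and V: "card V = s * s" and f: "f \<in> F"
  shows "card (nbrs F f) \<le> s * s"
    and "card (nbrs F f) = s * s \<Longrightarrow> z \<in> f \<Longrightarrow> cover F z = V - {z}"
proof -
  note ep = edge_props[OF F f]
  have T: "card (cover F y) = card (star F y) * (s-1)" for y
  proof -
    have "card (cover F y) = (\<Sum>g\<in>star F y. card g - 1)" using cover_card[OF F] by simp
    also have "\<dots> = (\<Sum>g\<in>star F y. s - 1)" using sz by (intro sum.cong) (auto simp: star_def)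
    finally show ?thesis by simp
  qed
  have cs: "card (star F y) \<le> s + 1" if "y \<in> f" for y
  proof -
    have "card (star F y) * (s-1) \<le> s * s - 1" using T[of y] cover_le[OF F, of y] ep that Dl by force
    then show ?thesis using arith6[OF s2] by simp
  qed
  have cf: "card f = s" using sz f by auto
  have "card (nbrs F f) = (\<Sum>y\<in>f. card (star F y) - 1)" using nbrs_card[OF F f] .
  also have "\<dots> \<le> card f * s"
    using sum_bounded_above[of f "\<lambda>y. card (star F y) - 1" s] cs by force
  finally show "card (nbrs F f) \<le> s * s" using cf by simp
  assume full: "card (nbrs F f) = s * s" and z: "z \<in> f"
  have "card (star F z) - 1 = s"
  proof (rule sum_eq_bound[OF ep(1) _ _ z])
    show "\<forall>x\<in>f. card (star F x) - 1 \<le> s" using cs by force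
    show "card f * s \<le> (\<Sum>y\<in>f. card (star F y) - 1)" using full nbrs_card[OF F f] cf by simp
  qed
  then have "card (star F z) = s + 1" using star_ge1[OF F f z] by simp
  then have "card (cover F z) = s * s - 1" using T[of z] arith7[of s] s2 by simp
  show "cover F z = V - {z}"
  proof (rule card_subset_eq)
    show "finite (V - {z})" using finV by simp
    show "cover F z \<subseteq> V - {z}" using cover_sub[OF F] .
    show "card (cover F z) = card (V - {z})" using \<open>card (cover F z) = s * s - 1\<close> V ep z finV by auto
  qed
qed

lemma tight_colour:
  assumes F: "F \<subseteq> E" "e \<in> F" and mn: "\<forall>g\<in>F. card e \<le> card g"
    and sq: "card V \<le> card e * card e" and big: "Dl < card (nbrs F e)"
  shows "\<exists>c. proper_edge_colouring F c (Dl + 1)"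
proof -
  define s where "s = card e"
  note tf = tight_facts[OF F mn sq big, folded s_def]
  note ep = edge_props[OF F]
  have s2: "2 \<le> s" using ep s_def by simp
  have Dl: "Dl + 1 = s * s" and V: "card V = s * s" and De: "card (nbrs F e) = s * s"
    and cove: "\<forall>y\<in>e. cover F y = V - {y}" and cse: "\<forall>y\<in>e. card (star F y) = s + 1"
    and sz: "\<forall>g\<in>F. card g = s" using tf by auto
  note uf = uniform_facts[OF F(1) s2 sz Dl V]
  have finF: "finite F" using finite_subset[OF F(1) finE] .
  obtain y1 y2 where y: "y1 \<in> e" "y2 \<in> e" "y1 \<noteq> y2" using two_elems[OF ep(3)] by blast
  have "\<not> V \<subseteq> e"
  proof
    assume "V \<subseteq> e"
    then have "card V \<le> card e" using ep(1) by (rule card_mono[rotated])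
    moreover have "s * 2 \<le> s * s" using s2 by (rule mult_le_mono2)
    ultimately show False using V s_def s2 by linarith
  qed
  then obtain z where z: "z \<in> V" "z \<notin> e" by blast
  have "z \<in> cover F y2" using cove y z by auto
  then obtain g where g: "g \<in> F" "y2 \<in> g" "z \<in> g" unfolding cover_def star_def by auto
  have ge: "g \<noteq> e" using g z by auto
  have y1g: "y1 \<notin> g" using lin2[of g e y1 y2] g y F ge by auto
  define H1 where "H1 = star F y1 - {e}"
  have cH1: "card H1 = s" using cse y(1) F(2) star_fin[OF F(1)] unfolding H1_def
    by (simp add: star_def)
  have "\<exists>h\<in>H1. h \<inter> g = {}"
  proof (rule ccontr)
    assume "\<not> (\<exists>h\<in>H1. h \<inter> g = {})"
    then have allm: "\<forall>h\<in>H1. \<exists>w. w \<in> h \<inter> g" by auto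
    define phi where "phi h = (SOME w. w \<in> h \<inter> g)" for h
    have phi: "phi h \<in> h \<inter> g" if "h \<in> H1" for h
      unfolding phi_def using allm that by (metis someI_ex)
    have "inj_on phi H1"
    proof
      fix h1 h2 assume a: "h1 \<in> H1" "h2 \<in> H1" "phi h1 = phi h2"
      have "y1 \<in> h1" "y1 \<in> h2" "h1 \<in> F" "h2 \<in> F" using a unfolding H1_def star_def by auto
      moreover have "phi h1 \<in> h1" "phi h1 \<in> h2" "phi h1 \<noteq> y1" using phi a y1g by force+
      ultimately show "h1 = h2" using lin2[of h1 h2 y1 "phi h1"] F by blast
    qed
    moreover have "phi ` H1 \<subseteq> g - {y2}"
    proof
      fix w assume "w \<in> phi ` H1"
      then obtain h where h: "h \<in> H1" "w = phi h" by blast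
      have "y1 \<in> h" "h \<in> F" "h \<noteq> e" using h unfolding H1_def star_def by auto
      moreover have "w \<in> h" "w \<in> g" using phi h by auto
      ultimately have "w \<noteq> y2" using lin2[of h e y1 y2] y F by blast
      then show "w \<in> g - {y2}" using \<open>w \<in> g\<close> by blast
    qed
    ultimately have "card H1 \<le> card (g - {y2})"
      using card_inj_on_le[of phi H1 "g - {y2}"] edge_props[OF F(1) g(1)] by blast
    also have "\<dots> = s - 1" using sz g by simp
    finally show False using cH1 s2 by simp
  qed
  then obtain a where a: "a \<in> H1" "a \<inter> g = {}" by blast
  define b where "b = g"
  have aF: "a \<in> F" "y1 \<in> a" "a \<noteq> e" using a unfolding H1_def star_def by auto
  have bF: "b \<in> F" "y2 \<in> b" "b \<noteq> e" using g ge b_def by auto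
  have ab: "a \<inter> b = {}" "a \<noteq> b" using a aF bF b_def by auto
  define P where "P = {p\<in>F - {a,b,e}. p \<inter> e = {}}"
  define Q where "Q = {q\<in>F - {a,b,e}. q \<inter> e \<noteq> {}}"
  have ss: "s * s > 0" using s2 by simp
  have c0: "proper_edge_colouring {a,b} (\<lambda>_. 0) (s * s)"
    using ab ss unfolding proper_edge_colouring_def by auto
  have finP: "finite P" "finite Q" using finF unfolding P_def Q_def by auto
  have PQF: "P \<subseteq> F" "Q \<subseteq> F" unfolding P_def Q_def by auto
  have eG0: "e \<notin> ({a,b} \<union> P) \<union> Q" using aF(3) bF(3) unfolding P_def Q_def by blast
  have st1: "\<forall>p\<in>P. card {f\<in>({a,b} \<union> P) - {p}. f \<inter> p \<noteq> {}} < s * s"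
  proof
    fix p assume pP: "p \<in> P"
    have pF: "p \<in> F" and pe: "p \<inter> e = {}" using pP unfolding P_def by auto
    let ?X = "{f\<in>({a,b} \<union> P) - {p}. f \<inter> p \<noteq> {}}"
    have Xs: "?X \<subseteq> nbrs F p" using aF(1) bF(1) PQF unfolding nbrs_def by blast
    have finN: "finite (nbrs F p)" using finF unfolding nbrs_def by auto
    show "card ?X < s * s"
    proof (cases "card (nbrs F p) < s * s")
      case True
      then show ?thesis using card_mono[OF finN Xs] by simp
    next
      case False
      then have full: "card (nbrs F p) = s * s" using uf(1)[OF pF] by simp
      have "2 \<le> card p" using edge_props[OF F(1) pF] by simp
      then have "p \<noteq> {}" by auto
      then obtain z' where z': "z' \<in> p" by blast
      have covz: "cover F z' = V - {z'}" using uf(2)[OF pF full z'] .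
      have z'e: "z' \<notin> e" using z' pe by auto
      have "\<exists>q. q \<in> F \<and> z' \<in> q \<and> w \<in> q" if "w \<in> e" for w
      proof -
        have "w \<in> cover F z'" using covz that ep(2) z'e by auto
        then show ?thesis unfolding cover_def star_def by auto
      qed
      then obtain q1 q2 where q1: "q1 \<in> F" "z' \<in> q1" "y1 \<in> q1" and q2: "q2 \<in> F" "z' \<in> q2" "y2 \<in> q2"
        using y by meson
      have q12: "q1 \<noteq> q2" using lin2[of q1 e y1 y2] q1 q2 y F z'e by auto
      have "\<exists>q\<in>{q1,q2}. q \<notin> {a,b}"
      proof (rule ccontr)
        assume "\<not> (\<exists>q\<in>{q1,q2}. q \<notin> {a,b})"
        then have "q1 \<in> {a,b}" "q2 \<in> {a,b}" by auto
        then have "z' \<in> a \<inter> b" using q1 q2 q12 by auto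
        then show False using ab by auto
      qed
      then obtain q where q: "q \<in> F" "z' \<in> q" "q \<inter> e \<noteq> {}" "q \<notin> {a,b}"
        using q1 q2 y by blast
      have qn: "q \<in> nbrs F p" using q z' pe unfolding nbrs_def by auto
      have qX: "q \<notin> ?X" using q unfolding P_def by auto
      have "?X \<subseteq> nbrs F p - {q}" using Xs qX by blast
      then have "card ?X \<le> card (nbrs F p - {q})" using finN by (intro card_mono) auto
      also have "\<dots> = s * s - 1" using full qn finN by simp
      finally show ?thesis using ss by linarith
    qed
  qed
  obtain c1 where c1: "proper_edge_colouring ({a,b} \<union> P) c1 (s * s)" "\<forall>x\<in>{a,b}. c1 x = 0"
    using extend_set[OF finP(1) c0 _ st1] by auto
  have st2: "\<forall>q\<in>Q. card {f\<in>(({a,b} \<union> P) \<union> Q) - {q}. f \<inter> q \<noteq> {}} < s * s"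
  proof
    fix q assume qQ: "q \<in> Q"
    have qF: "q \<in> F" and qe: "q \<inter> e \<noteq> {}" "q \<noteq> e" using qQ unfolding Q_def by auto
    let ?X = "{f\<in>(({a,b} \<union> P) \<union> Q) - {q}. f \<inter> q \<noteq> {}}"
    have finN: "finite (nbrs F q)" using finF unfolding nbrs_def by auto
    have en: "e \<in> nbrs F q" using qe F unfolding nbrs_def by auto
    have "?X \<subseteq> nbrs F q - {e}" using aF(1) bF(1) PQF eG0 unfolding nbrs_def by blast
    then have "card ?X \<le> card (nbrs F q - {e})" using finN by (intro card_mono) auto
    also have "\<dots> = card (nbrs F q) - 1" using en finN by simp
    also have "\<dots> < s * s" using uf(1)[OF qF] ss by linarith
    finally show "card ?X < s * s" .
  qed
  obtain c2 where c2: "proper_edge_colouring (({a,b} \<union> P) \<union> Q) c2 (s * s)"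
    "\<forall>x\<in>{a,b} \<union> P. c2 x = c1 x"
    using extend_set[OF finP(2) c1(1) _ st2] finP by auto
  have c2ab: "c2 a = c2 b" using c2(2) c1(2) by auto
  define G where "G = ({a,b} \<union> P) \<union> Q"
  have eG: "e \<notin> G" using eG0 unfolding G_def by blast
  have finG: "finite G" using finP unfolding G_def by auto
  define N where "N = {f\<in>G. f \<inter> e \<noteq> {}}"
  have Nn: "N \<subseteq> nbrs F e" using aF(1) bF(1) PQF eG unfolding N_def G_def nbrs_def by blast
  have finN: "finite N" using finG unfolding N_def by auto
  have abe: "a \<inter> e \<noteq> {}" "b \<inter> e \<noteq> {}" using aF(2) bF(2) y(1,2) by blast+
  have abN: "a \<in> N" "b \<in> N" using abe unfolding N_def G_def by simp_all
  have "c2 ` N = c2 ` (N - {b})"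
  proof
    show "c2 ` (N - {b}) \<subseteq> c2 ` N" by blast
    show "c2 ` N \<subseteq> c2 ` (N - {b})"
    proof
      fix u assume "u \<in> c2 ` N"
      then obtain x where x: "x \<in> N" "u = c2 x" by blast
      show "u \<in> c2 ` (N - {b})"
      proof (cases "x = b")
        case True
        then have "u = c2 a" using x c2ab by simp
        moreover have "a \<in> N - {b}" using abN ab by simp
        ultimately show ?thesis by blast
      next
        case False
        then show ?thesis using x by blast
      qed
    qed
  qed
  then have "card (c2 ` N) \<le> card (N - {b})" by (metis card_image_le finN finite_Diff)
  also have "\<dots> = card N - 1" using abN finN by simp
  also have "card N \<le> s * s"
  proof -
    have "finite (nbrs F e)" using finF unfolding nbrs_def by simp
    then show ?thesis using card_mono[OF _ Nn] De by simp
  qed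
  finally have "card (c2 ` N) < s * s" using ss by linarith
  then obtain c3 where c3: "proper_edge_colouring (insert e G) c3 (s * s)"
    using extend_one[OF c2(1)[folded G_def] finG eG] unfolding N_def by blast
  have "insert e G \<subseteq> F" using F(2) aF(1) bF(1) PQF unfolding G_def by blast
  moreover have "F \<subseteq> insert e G" unfolding G_def P_def Q_def by blast
  ultimately have "insert e G = F" by blast
  then show ?thesis using c3 Dl by auto
qed

lemma colourable:
  assumes hyp: "\<forall>e\<in>E. (\<exists>x0\<in>e. card (star E x0) \<le> card e) \<or> card V \<le> card e * card e"
    and finF0: "finite F" and FE0: "F \<subseteq> E"
  shows "\<exists>c. proper_edge_colouring F c (Dl + 1)"
  using finF0 FE0
proof (induction F rule: finite_psubset_induct)
  case (psubset F)
  show ?case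
  proof (cases "F = {}")
    case True
    then show ?thesis unfolding proper_edge_colouring_def by auto
  next
    case False
    have "Min (card ` F) \<in> card ` F" using False psubset.hyps by (intro Min_in) auto
    then obtain e where e: "e \<in> F" "card e = Min (card ` F)" by (metis imageE)
    have mn: "\<forall>g\<in>F. card e \<le> card g"
    proof
      fix g assume "g \<in> F"
      then have cg: "card g \<in> card ` F" by blast
      have "finite (card ` F)" using psubset.hyps by blast
      from this cg have "Min (card ` F) \<le> card g" by (rule Min_le)
      then show "card e \<le> card g" using e(2) by simp
    qed
    have "F - {e} \<subset> F" using e by auto
    moreover have "F - {e} \<subseteq> E" using psubset.prems by auto
    ultimately have "\<exists>c. proper_edge_colouring (F - {e}) c (Dl + 1)"
      by (rule psubset.IH)
    then obtain c where c: "proper_edge_colouring (F - {e}) c (Dl + 1)" by blast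
    show ?thesis
    proof (cases "card (nbrs F e) \<le> Dl")
      case True
      have eq: "{f\<in>F - {e}. f \<inter> e \<noteq> {}} = nbrs F e" unfolding nbrs_def by auto
      have "card (c ` {f\<in>F - {e}. f \<inter> e \<noteq> {}}) \<le> card {f\<in>F - {e}. f \<inter> e \<noteq> {}}"
        using psubset.hyps by (intro card_image_le) auto
      then have "card (c ` {f\<in>F - {e}. f \<inter> e \<noteq> {}}) < Dl + 1" using True eq by simp
      then obtain c' where "proper_edge_colouring (insert e (F - {e})) c' (Dl + 1)"
        using extend_one[OF c] psubset.hyps by blast
      moreover have "insert e (F - {e}) = F" using e by auto
      ultimately show ?thesis by auto
    next
      case False
      have eE: "e \<in> E" using e psubset.prems by auto
      show ?thesis
      proof (cases "\<exists>x0\<in>e. card (star E x0) \<le> card e")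
        case True
        then obtain x0 where x0: "x0 \<in> e" "card (star E x0) \<le> card e" by blast
        have "card (star F x0) \<le> card (star E x0)"
          using psubset.prems star_fin[of E x0] by (intro card_mono) (auto simp: star_def)
        then have "card (nbrs F e) \<le> Dl"
          using nontight[OF psubset.prems e(1) mn x0(1)] x0 by simp
        then show ?thesis using False by simp
      next
        case False2: False
        then have "card V \<le> card e * card e" using hyp eE by blast
        then show ?thesis using tight_colour[OF psubset.prems e(1) mn] False by simp
      qed
    qed
  qed
qed

end


theorem theorem5p3:
  fixes V :: "'a set" and E E' E'' :: "'a set set" and n :: nat
  assumes "hypergraph V E"
    and "linear_hg E"
    and "loopless E"
    and "card V = n"
    and "E = E' \<union> E''" and "E' \<inter> E'' = {}"
    and "ereal (sqrt (real n)) \<le> antirank E'"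
    and "\<forall>e\<in>E''. real (card e) < sqrt (real n)"
    and "\<forall>e\<in>E''. \<exists>x0\<in>e. hdeg E x0 \<le> card e"
  shows "chromatic_index E \<le> sec2_maxdeg V E + 1"
proof -
  define Dl where "Dl = sec2_maxdeg V E"
  have hg: "finite V" "finite E" "\<And>e. e \<in> E \<Longrightarrow> e \<noteq> {} \<and> e \<subseteq> V"
    using assms(1) unfolding hypergraph_def by auto
  have ex: "\<exists>c. proper_edge_colouring E c (Dl + 1)"
  proof (cases "E = {}")
    case True
    then show ?thesis unfolding proper_edge_colouring_def by auto
  next
    case False
    then obtain e0 where "e0 \<in> E" by blast
    then have Vne: "V \<noteq> {}" using hg by blast
    have finimg: "finite (sec2_deg V E ` V)" using hg by simp
    have degle: "sec2_deg V E y \<le> Dl" if "y \<in> V" for y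
      unfolding Dl_def sec2_maxdeg_def using Vne finimg that by simp
    have adjsub: "{z\<in>V. sec2_adj E y z} \<subseteq> V - {y}" for y unfolding sec2_adj_def by auto
    interpret LH V E Dl
    proof
      show "finite V" "finite E" using hg by auto
      show "\<And>e. e \<in> E \<Longrightarrow> e \<subseteq> V" using hg by auto
      show "\<And>e. e \<in> E \<Longrightarrow> 2 \<le> card e"
      proof -
        fix e assume eE: "e \<in> E"
        have "finite e" using hg eE finite_subset by blast
        moreover have "e \<noteq> {}" using hg eE by blast
        moreover have "card e \<noteq> 1" using assms(3) eE unfolding loopless_def by blast
        ultimately show "2 \<le> card e" by (metis One_nat_def Suc_1 Suc_leI card_gt_0_iff le_neq_implies_less
              less_Suc_eq_le not_less)
      qed
      show "\<And>e f. e \<in> E \<Longrightarrow> f \<in> E \<Longrightarrow> e \<noteq> f \<Longrightarrow> card (e \<inter> f) \<le> 1"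
        using assms(2) unfolding linear_hg_def by blast
      show "\<And>y. y \<in> V \<Longrightarrow> card (cover E y) \<le> Dl"
      proof -
        fix y assume yV: "y \<in> V"
        have "cover E y \<subseteq> {z\<in>V. sec2_adj E y z}"
          unfolding cover_def star_def sec2_adj_def using hg by blast
        then have "card (cover E y) \<le> card {z\<in>V. sec2_adj E y z}"
          using hg by (intro card_mono) auto
        then show "card (cover E y) \<le> Dl" using degle[OF yV] unfolding sec2_deg_def by simp
      qed
      show "Dl < card V"
      proof -
        have "Dl \<in> sec2_deg V E ` V" unfolding Dl_def sec2_maxdeg_def using Vne finimg by simp
        then obtain y where y: "y \<in> V" "Dl = sec2_deg V E y" by blast
        have "sec2_deg V E y \<le> card (V - {y})"
          unfolding sec2_deg_def using adjsub hg by (intro card_mono) auto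
        also have "\<dots> < card V" using y hg by (metis card_Diff1_less)
        finally show "Dl < card V" using y by simp
      qed
    qed
    have hyp: "\<forall>e\<in>E. (\<exists>x0\<in>e. card (star E x0) \<le> card e) \<or> card V \<le> card e * card e"
    proof
      fix e assume eE: "e \<in> E"
      show "(\<exists>x0\<in>e. card (star E x0) \<le> card e) \<or> card V \<le> card e * card e"
      proof (cases "e \<in> E''")
        case True
        then have "\<exists>x0\<in>e. card (star E x0) \<le> card e" using assms(9) unfolding hdeg_def star_def by simp
        then show ?thesis by blast
      next
        case False
        then have eE': "e \<in> E'" using eE assms(5) by blast
        then have E'ne: "E' \<noteq> {}" by blast
        have finE': "finite E'" using hg assms(5) by auto
        have "Min (card ` E') \<le> card e" using finE' eE' by simp
        then have "ereal (sqrt (real n)) \<le> ereal (real (card e))"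
          using assms(7) E'ne unfolding antirank_def by (simp add: order_trans)
        then have sq: "sqrt (real n) \<le> real (card e)" by simp
        have "real n = (sqrt (real n))^2" by simp
        also have "\<dots> \<le> (real (card e))^2" using sq by (intro power_mono) auto
        finally have "real n \<le> real (card e * card e)" by (simp add: power2_eq_square)
        then have "n \<le> card e * card e" by linarith
        then show ?thesis using assms(4) by simp
      qed
    qed
    show ?thesis using colourable[OF hyp hg(2)] by simp
  qed
  then obtain c where "proper_edge_colouring E c (Dl + 1)" by blast
  then have "chromatic_index E \<le> Dl + 1" unfolding chromatic_index_def by (intro Least_le) blast
  then show ?thesis using Dl_def by simp
qed

end
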